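(* Let $F$ be a forest and $t$ a positive constant. Then there exists a (zero,degree)-assignment $\tau'$ for $F$ with $\overline{\tau'}\le t$ and $Ldyn_t(F)=dyn_{\tau'}(F)$.
   Context: A threshold assignment is a function $\tau:V(F)\to\{0,1,2,\dots\}$ with $\tau(v)\le deg_F(v)$ for every $v$; $\overline{\tau}=\sum_v\tau(v)/|V(F)|$. A (zero,degree)-assignment is one with $\tau(v)\in\{0,deg_F(v)\}$ for every vertex $v$. A set $D\subseteq V(F)$ is a $\tau$-dynamo if $V(F)$ can be partitioned into $D_0=D,D_1,\dots,D_k$ such that for each $1\le i\le k$, $D_i$ consists of all vertices not in $D_0\cup\dots\cup D_{i-1}$ having at least $\tau(v)$ neighbors in $D_0\cup\dots\cup D_{i-1}$; $dyn_\tau(F)$ is the minimum size of a $\tau$-dynamo. $Ldyn_t(F)=\max\{dyn_\tau(F):\overline{\tau}\le t\}$. *)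

theory Defs
  imports Main "HOL-Library.Sublist" Complex_Main
begin

definition simple_graph :: "'a set \<Rightarrow> ('a \<Rightarrow> 'a \<Rightarrow> bool) \<Rightarrow> bool" where
  "simple_graph V E \<longleftrightarrow> finite V \<and> (\<forall>u v. E u v \<longrightarrow> u \<in> V \<and> v \<in> V)
     \<and> (\<forall>u v. E u v \<longrightarrow> E v u) \<and> (\<forall>v. \<not> E v v)"

definition has_cycle :: "'a set \<Rightarrow> ('a \<Rightarrow> 'a \<Rightarrow> bool) \<Rightarrow> bool" where
  "has_cycle V E \<longleftrightarrow> (\<exists>cs. length cs \<ge> 3 \<and> distinct cs \<and> set cs \<subseteq> V
     \<and> (\<forall>i. Suc i < length cs \<longrightarrow> E (cs ! i) (cs ! Suc i))
     \<and> E (last cs) (hd cs))"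

definition forest :: "'a set \<Rightarrow> ('a \<Rightarrow> 'a \<Rightarrow> bool) \<Rightarrow> bool" where
  "forest V E \<longleftrightarrow> simple_graph V E \<and> \<not> has_cycle V E"

definition deg :: "'a set \<Rightarrow> ('a \<Rightarrow> 'a \<Rightarrow> bool) \<Rightarrow> 'a \<Rightarrow> nat" where
  "deg V E v = card {u \<in> V. E v u}"

definition threshold_assignment :: "'a set \<Rightarrow> ('a \<Rightarrow> 'a \<Rightarrow> bool) \<Rightarrow> ('a \<Rightarrow> nat) \<Rightarrow> bool" where
  "threshold_assignment V E \<tau> \<longleftrightarrow> (\<forall>v\<in>V. \<tau> v \<le> deg V E v)"

definition zero_degree_assignment :: "'a set \<Rightarrow> ('a \<Rightarrow> 'a \<Rightarrow> bool) \<Rightarrow> ('a \<Rightarrow> nat) \<Rightarrow> bool" where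
  "zero_degree_assignment V E \<tau> \<longleftrightarrow> (\<forall>v\<in>V. \<tau> v = 0 \<or> \<tau> v = deg V E v)"

definition avg_tau :: "'a set \<Rightarrow> ('a \<Rightarrow> nat) \<Rightarrow> real" where
  "avg_tau V \<tau> = real (\<Sum>v\<in>V. \<tau> v) / real (card V)"

definition dyn_step :: "'a set \<Rightarrow> ('a \<Rightarrow> 'a \<Rightarrow> bool) \<Rightarrow> ('a \<Rightarrow> nat) \<Rightarrow> 'a set \<Rightarrow> 'a set" where
  "dyn_step V E \<tau> S = S \<union> {v \<in> V - S. card {u \<in> S. E v u} \<ge> \<tau> v}"

definition is_dynamo :: "'a set \<Rightarrow> ('a \<Rightarrow> 'a \<Rightarrow> bool) \<Rightarrow> ('a \<Rightarrow> nat) \<Rightarrow> 'a set \<Rightarrow> bool" where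
  "is_dynamo V E \<tau> D \<longleftrightarrow> D \<subseteq> V \<and> (\<exists>k. (dyn_step V E \<tau> ^^ k) D = V)"

definition dyn :: "'a set \<Rightarrow> ('a \<Rightarrow> 'a \<Rightarrow> bool) \<Rightarrow> ('a \<Rightarrow> nat) \<Rightarrow> nat" where
  "dyn V E \<tau> = (LEAST n. \<exists>D. is_dynamo V E \<tau> D \<and> card D = n)"

definition Ldyn :: "'a set \<Rightarrow> ('a \<Rightarrow> 'a \<Rightarrow> bool) \<Rightarrow> real \<Rightarrow> nat" where
  "Ldyn V E t = Max {dyn V E \<tau> | \<tau>. threshold_assignment V E \<tau> \<and> avg_tau V \<tau> \<le> t}"

end

theory Submission
  imports Defs
begin

lemma iter_sub: "D \<subseteq> V \<Longrightarrow> (dyn_step V E \<tau> ^^ k) D \<subseteq> V"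
  by (induction k) (auto simp: dyn_step_def)

lemma rank_dynamo:
  fixes r :: "'a \<Rightarrow> nat"
  assumes fin: "finite V" and DV: "D \<subseteq> V"
    and rk: "\<forall>w\<in>V - D. \<tau> w \<le> card {x\<in>V. E w x \<and> r x < r w}"
  shows "is_dynamo V E \<tau> D"
proof -
  have key: "{w\<in>V. r w < k} \<union> D \<subseteq> (dyn_step V E \<tau> ^^ k) D" for k :: nat
  proof (induction k)
    case 0 show ?case by auto
  next
    case (Suc k)
    let ?S = "(dyn_step V E \<tau> ^^ k) D"
    have SV: "?S \<subseteq> V" using iter_sub DV by blast
    show ?case
    proof
      fix w assume w: "w \<in> {w\<in>V. r w < Suc k} \<union> D"
      show "w \<in> (dyn_step V E \<tau> ^^ Suc k) D"
      proof (cases "w \<in> ?S")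
        case True then show ?thesis by (simp add: dyn_step_def)
      next
        case False
        then have nD: "w \<notin> D" and wV: "w \<in> V" and rw: "r w < Suc k" using w Suc.IH by auto
        have "{x\<in>V. E w x \<and> r x < r w} \<subseteq> {u\<in>?S. E w u}" using Suc.IH rw by auto
        then have "card {x\<in>V. E w x \<and> r x < r w} \<le> card {u\<in>?S. E w u}"
          by (intro card_mono) (use fin SV in \<open>auto intro: finite_subset\<close>)
        with rk nD wV have "\<tau> w \<le> card {u\<in>?S. E w u}" by force
        with False wV show ?thesis by (simp add: dyn_step_def)
      qed
    qed
  qed
  have "V \<subseteq> (dyn_step V E \<tau> ^^ Suc (\<Sum>w\<in>V. r w)) D"
  proof
    fix w assume "w \<in> V"
    then have "r w \<le> (\<Sum>w\<in>V. r w)" using fin by (intro member_le_sum) auto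
    then show "w \<in> (dyn_step V E \<tau> ^^ Suc (\<Sum>w\<in>V. r w)) D" using key[of "Suc (\<Sum>w\<in>V. r w)"] \<open>w \<in> V\<close> by auto
  qed
  with iter_sub[OF DV] DV show ?thesis unfolding is_dynamo_def by blast
qed

lemma first_time:
  assumes S_def: "S = (\<lambda>k. (dyn_step V E \<tau> ^^ k) D)"
  and fin: "finite V" and DV: "D \<subseteq> V" and SK: "S K = V"
    and tx: "\<tau> x = deg V E x" and xV: "x \<in> V" and xD: "x \<notin> D" and Exy: "E x y" and yV: "y \<in> V"
  shows "(LEAST k. y \<in> S k) < (LEAST k. x \<in> S k)"
proof -
  define i where "i = (LEAST k. x \<in> S k)"
  have xi: "x \<in> S i" unfolding i_def using xV SK by (metis LeastI)
  have "i \<noteq> 0" proof assume "i = 0" then show False using xi xD by (simp add: S_def) qed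
  then obtain p where ip: "i = Suc p" by (cases i) auto
  have xp: "x \<notin> S p" using ip unfolding i_def by (metis lessI not_less_Least)
  have SpV: "S p \<subseteq> V" unfolding S_def using iter_sub DV by blast
  have "x \<in> dyn_step V E \<tau> (S p)" using xi ip by (simp add: S_def)
  then have "card {u\<in>S p. E x u} \<ge> deg V E x" using xp tx by (auto simp: dyn_step_def)
  then have "{u\<in>S p. E x u} = {u\<in>V. E x u}"
    by (intro card_seteq) (use fin SpV in \<open>auto simp: deg_def\<close>)
  then have "y \<in> S p" using Exy yV by auto
  then have "(LEAST k. y \<in> S k) \<le> p" by (rule Least_le)
  then show ?thesis using ip i_def by simp
qed

lemma exists_leaf:
  assumes fin: "finite V" and ne: "V \<noteq> {}" and sym: "\<forall>u v. E u v \<longrightarrow> E v u"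
    and irr: "\<forall>v. \<not> E v v" and nc: "\<not> has_cycle V E"
  shows "\<exists>v\<in>V. deg V E v \<le> 1"
proof (rule ccontr)
  assume "\<not> ?thesis"
  then have d2: "\<forall>v\<in>V. 2 \<le> deg V E v" by auto
  define pth where "pth xs \<longleftrightarrow> xs \<noteq> [] \<and> distinct xs \<and> set xs \<subseteq> V \<and> (\<forall>i. Suc i < length xs \<longrightarrow> E (xs!i) (xs!Suc i))" for xs
  define Q where "Q = {xs. pth xs}"
  have "Q \<subseteq> {xs. set xs \<subseteq> V \<and> length xs \<le> card V}"
  proof
    fix xs assume "xs \<in> Q"
    then have d: "distinct xs" and sV: "set xs \<subseteq> V" by (auto simp: Q_def pth_def)
    have "length xs \<le> card V" using distinct_card[OF d] card_mono[OF fin sV] by simp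
    then show "xs \<in> {xs. set xs \<subseteq> V \<and> length xs \<le> card V}" using sV by simp
  qed
  then have finQ: "finite Q" using finite_lists_length_le[OF fin] finite_subset by blast
  obtain a where "a \<in> V" using ne by auto
  then have "[a] \<in> Q" by (auto simp: Q_def pth_def)
  then have neQ: "length ` Q \<noteq> {}" by auto
  obtain xs where xsQ: "xs \<in> Q" and xsmax: "length xs = Max (length ` Q)"
    using Max_in[OF finite_imageI[OF finQ] neQ] by auto
  have maxl: "length ys \<le> length xs" if "ys \<in> Q" for ys
    using xsmax Max_ge[OF finite_imageI[OF finQ]] that by auto
  have p: "pth xs" using xsQ Q_def by auto
  define x where "x = hd xs"
  have x0: "xs ! 0 = x" using p by (simp add: x_def pth_def hd_conv_nth)
  have xV: "x \<in> V" using p by (auto simp: pth_def x_def)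
  let ?N = "{w\<in>V. E x w}"
  have "2 \<le> card ?N" using d2 xV by (auto simp: deg_def)
  moreover have "card ?N \<le> card (?N - {xs ! 1}) + 1"
    by (simp add: card_Diff_singleton_if del: One_nat_def, arith)
  ultimately have "card (?N - {xs ! 1}) \<noteq> 0" by linarith
  then have "?N - {xs ! 1} \<noteq> {}" by (metis card.empty)
  then obtain y where "y \<in> ?N - {xs ! 1}" by blast
  then have yN: "y \<in> ?N" and y1: "y \<noteq> xs ! 1" by auto
  have yxs: "y \<in> set xs"
  proof (rule ccontr)
    assume "y \<notin> set xs"
    have "\<forall>i. Suc i < length (y # xs) \<longrightarrow> E ((y#xs)!i) ((y#xs)!Suc i)"
    proof (intro allI impI)
      fix i assume i: "Suc i < length (y # xs)"
      show "E ((y#xs)!i) ((y#xs)!Suc i)"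
      proof (cases i)
        case 0 then show ?thesis using x0 yN sym by auto
      next
        case (Suc k) then show ?thesis using p i by (simp add: pth_def)
      qed
    qed
    then have "pth (y # xs)" using p yN \<open>y \<notin> set xs\<close> unfolding pth_def by auto
    then have "y # xs \<in> Q" by (simp add: Q_def)
    from maxl[OF this] show False by simp
  qed
  then obtain j where j: "j < length xs" "xs ! j = y" by (auto simp: in_set_conv_nth)
  have "j \<noteq> 0"
  proof
    assume "j = 0"
    then have "y = x" using j x0 by simp
    then show False using irr yN by auto
  qed
  moreover have "j \<noteq> 1" using j y1 by auto
  ultimately have j2: "2 \<le> j" by auto
  define cs where "cs = take (Suc j) xs"
  have "length cs \<ge> 3" using j j2 by (simp add: cs_def)
  moreover have "distinct cs" using p by (simp add: cs_def pth_def)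
  moreover have "set cs \<subseteq> V" using p set_take_subset unfolding cs_def pth_def by fastforce
  moreover have "\<forall>i. Suc i < length cs \<longrightarrow> E (cs ! i) (cs ! Suc i)"
    using p j by (auto simp: cs_def pth_def)
  moreover have "last cs = y"
  proof -
    have lc: "length cs = Suc j" using j by (simp add: cs_def)
    then have "cs \<noteq> []" by auto
    then have "last cs = cs ! j" using lc by (simp add: last_conv_nth)
    then show ?thesis using j by (simp add: cs_def)
  qed
  moreover have "hd cs = x" using j by (simp add: cs_def x_def)
  ultimately have "has_cycle V E" unfolding has_cycle_def using yN sym by blast
  with nc show False by simp
qed

lemma has_cycle_mono: "V' \<subseteq> V \<Longrightarrow> has_cycle V' E \<Longrightarrow> has_cycle V E"
  unfolding has_cycle_def by blast

lemma deg_remove: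
  assumes "finite V" "v \<in> V"
  shows "deg (V - {v}) E w = (if E w v then deg V E w - 1 else deg V E w)"
proof -
  have "{x\<in>V - {v}. E w x} = {x\<in>V. E w x} - {v}" by auto
  then show ?thesis using assms unfolding deg_def by (simp add: card_Diff_singleton_if)
qed

lemma deg_pos: "finite V \<Longrightarrow> v \<in> V \<Longrightarrow> E w v \<Longrightarrow> 1 \<le> deg V E w"
proof -
  assume a: "finite V" "v \<in> V" "E w v"
  then have "v \<in> {u\<in>V. E w u}" by simp
  then have "card {u\<in>V. E w u} > 0" using a(1) by (subst card_gt_0_iff) auto
  then show ?thesis unfolding deg_def by simp
qed

lemma count_ext:
  assumes "finite B" "A \<subseteq> B" "c \<Longrightarrow> z \<in> B \<and> z \<notin> A" "t' \<le> card A"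
    "t \<le> t' + (if c then 1 else 0)"
  shows "t \<le> (card B :: nat)"
proof (cases c)
  case True
  have fA: "finite A" using assms finite_subset by blast
  have "card (insert z A) \<le> card B" using assms True by (intro card_mono) auto
  then show ?thesis using assms True fA by simp
next
  case False
  have "card A \<le> card B" by (rule card_mono) (use assms in auto)
  then show ?thesis using assms(4,5) False by simp
qed

definition good :: "'a set \<Rightarrow> ('a \<Rightarrow> 'a \<Rightarrow> bool) \<Rightarrow> ('a \<Rightarrow> nat) \<Rightarrow> ('a \<Rightarrow> nat) \<Rightarrow> 'a set \<Rightarrow> ('a \<Rightarrow> 'a) \<Rightarrow> bool" where
  "good V E \<tau> r D m \<longleftrightarrow> D \<subseteq> V \<and> m ` D \<subseteq> V \<and> inj_on m D \<and> m ` D \<inter> D = {} \<and> (\<forall>d\<in>D. E d (m d))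
    \<and> (\<forall>w\<in>V - D. \<tau> w \<le> card {x\<in>V. E w x \<and> r x < r w})
    \<and> (\<forall>w\<in>D \<union> m ` D. 1 \<le> \<tau> w) \<and> (\<Sum>w\<in>D \<union> m ` D. deg V E w) \<le> (\<Sum>w\<in>V. \<tau> w)"

lemma goodI:
  assumes "D \<subseteq> V" "m ` D \<subseteq> V" "inj_on m D" "m ` D \<inter> D = {}" "\<And>d. d\<in>D \<Longrightarrow> E d (m d)"
    "\<And>w. w\<in>V - D \<Longrightarrow> \<tau> w \<le> card {x\<in>V. E w x \<and> r x < r w}"
    "\<And>w. w\<in>D \<union> m ` D \<Longrightarrow> 1 \<le> \<tau> w" "(\<Sum>w\<in>D \<union> m ` D. deg V E w) \<le> (\<Sum>w\<in>V. \<tau> w)"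
  shows "good V E \<tau> r D m"
  unfolding good_def using assms by auto

lemma goodD:
  assumes "good V E \<tau> r D m"
  shows "D \<subseteq> V" "m ` D \<subseteq> V" "inj_on m D" "m ` D \<inter> D = {}" "\<And>d. d\<in>D \<Longrightarrow> E d (m d)"
    "\<And>w. w\<in>V - D \<Longrightarrow> \<tau> w \<le> card {x\<in>V. E w x \<and> r x < r w}"
    "\<And>w. w\<in>D \<union> m ` D \<Longrightarrow> 1 \<le> \<tau> w" "(\<Sum>w\<in>D \<union> m ` D. deg V E w) \<le> (\<Sum>w\<in>V. \<tau> w)"
  using assms unfolding good_def by simp_all

lemma key:
  assumes "finite V" "\<forall>u v. E u v \<longrightarrow> E v u" "\<forall>v. \<not> E v v" "\<not> has_cycle V E"
    "\<forall>v\<in>V. \<tau> v \<le> deg V E v"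
  shows "\<exists>r D m. good V E \<tau> r D m"
  using assms
proof (induction "card V" arbitrary: V \<tau> rule: less_induct)
  case less
  have fin: "finite V" and sym: "\<forall>u v. E u v \<longrightarrow> E v u" and irr: "\<forall>v. \<not> E v v"
    and nc: "\<not> has_cycle V E" and td: "\<forall>v\<in>V. \<tau> v \<le> deg V E v" using less.prems by auto
  show ?case
  proof (cases "V = {}")
    case True
    then have "good V E \<tau> (\<lambda>_. 0) {} id" by (simp add: good_def)
    then show ?thesis by blast
  next
    case ne: False
    show ?thesis
    proof (cases "\<exists>v\<in>V. \<tau> v = 0")
      case True
      then obtain v where vV: "v \<in> V" and tv: "\<tau> v = 0" by auto
      define V' where "V' = V - {v}"
      define \<tau>' where "\<tau>' w = (if E w v then \<tau> w - 1 else \<tau> w)" for w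
      have finV': "finite V'" using fin by (simp add: V'_def)
      have cV: "card V' < card V" unfolding V'_def by (rule card_Diff1_less[OF fin vV])
      have degV': "deg V' E w = (if E w v then deg V E w - 1 else deg V E w)" for w
        unfolding V'_def using deg_remove[OF fin vV] .
      have "\<forall>w\<in>V'. \<tau>' w \<le> deg V' E w"
      proof
        fix w assume "w \<in> V'"
        then have "\<tau> w \<le> deg V E w" using td by (simp add: V'_def)
        then show "\<tau>' w \<le> deg V' E w" unfolding \<tau>'_def degV' by (simp add: diff_le_mono)
      qed
      moreover have "\<not> has_cycle V' E" using nc has_cycle_mono[of V' V E] by (auto simp: V'_def)
      ultimately obtain r' D m where g: "good V' E \<tau>' r' D m"
        using less.hyps[OF cV finV' sym irr] by blast
      define r where "r w = (if w = v then 0 else Suc (r' w))" for w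
      let ?P = "D \<union> m ` D"
      have PV: "?P \<subseteq> V'" using goodD(1,2)[OF g] by blast
      have finP: "finite ?P" using PV finV' finite_subset by blast
      have "(\<Sum>w\<in>?P. deg V E w) = (\<Sum>w\<in>?P. deg V' E w + (if E w v then 1 else 0))"
      proof (rule sum.cong)
        fix w show "deg V E w = deg V' E w + (if E w v then 1 else 0)"
          using deg_pos[OF fin vV, of E w] by (cases "E w v") (auto simp: degV')
      qed simp
      also have "\<dots> = (\<Sum>w\<in>?P. deg V' E w) + (\<Sum>w\<in>?P. (if E w v \<and> 1 \<le> \<tau> w then 1 else 0))"
      proof -
        have sp: "1 \<le> \<tau> w" if "w \<in> ?P" "E w v" for w
        proof -
          have "1 \<le> \<tau>' w" using goodD(7)[OF g] that(1) by blast
          then show ?thesis using that(2) unfolding \<tau>'_def by simp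
        qed
        have "(\<Sum>w\<in>?P. (if E w v then 1 else 0)) = (\<Sum>w\<in>?P. (if E w v \<and> 1 \<le> \<tau> w then (1::nat) else 0))"
          by (rule sum.cong) (use sp in auto)
        then show ?thesis by (simp add: sum.distrib)
      qed
      also have "\<dots> \<le> (\<Sum>w\<in>V'. \<tau>' w) + (\<Sum>w\<in>V'. (if E w v \<and> 1 \<le> \<tau> w then 1 else 0))"
        by (rule add_mono[OF goodD(8)[OF g] sum_mono2[OF finV' PV]]) simp
      also have "\<dots> = (\<Sum>w\<in>V'. \<tau> w)"
        by (rule trans[OF sum.distrib[symmetric]], rule sum.cong) (auto simp: \<tau>'_def)
      also have "\<dots> \<le> (\<Sum>w\<in>V. \<tau> w)" using fin by (intro sum_mono2) (auto simp: V'_def)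
      finally have sumP: "(\<Sum>w\<in>?P. deg V E w) \<le> (\<Sum>w\<in>V. \<tau> w)" .
      have cnt: "\<tau> w \<le> card {x\<in>V. E w x \<and> r x < r w}" if w: "w \<in> V - D" for w
      proof (cases "w = v")
        case True then show ?thesis using tv by simp
      next
        case False
        then have "w \<in> V' - D" using w by (auto simp: V'_def)
        then have A: "\<tau>' w \<le> card {x\<in>V'. E w x \<and> r' x < r' w}" using goodD(6)[OF g] by blast
        show ?thesis
          by (rule count_ext[OF _ _ _ A, where c = "E w v" and z = v]) (use fin vV False in \<open>auto simp: V'_def r_def \<tau>'_def\<close>)
      qed
      have gg: "D \<subseteq> V'" "m ` D \<subseteq> V'" "inj_on m D" "m ` D \<inter> D = {}" "\<forall>d\<in>D. E d (m d)"
        "\<forall>w\<in>D \<union> m ` D. 1 \<le> \<tau>' w" using goodD[OF g] by blast+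
      have M0: "\<forall>w\<in>D \<union> m ` D. 1 \<le> \<tau> w"
      proof
        fix w assume "w \<in> D \<union> m ` D"
        then have "1 \<le> \<tau>' w" using gg(6) by blast
        then show "1 \<le> \<tau> w" unfolding \<tau>'_def by (simp split: if_splits)
      qed
      have M1: "D \<subseteq> V" "m ` D \<subseteq> V" using gg(1,2) by (auto simp: V'_def)
      have "good V E \<tau> r D m"
          by (rule goodI[OF M1 gg(3,4) _ cnt _ sumP]) (use gg(5) M0 in blast)+

      then show ?thesis by blast
    next
      case False
      then have t1: "\<forall>w\<in>V. 1 \<le> \<tau> w" by (auto simp: Suc_le_eq)
      obtain v where vV: "v \<in> V" and dv: "deg V E v \<le> 1" using exists_leaf[OF fin ne sym irr nc] by blast
      have dv1: "deg V E v = 1" and tv: "\<tau> v = 1" using t1 td vV dv by force+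
      obtain u where Nv: "{x\<in>V. E v x} = {u}" using dv1 unfolding deg_def by (auto simp: card_1_singleton_iff)
      have uV: "u \<in> V" and Evu: "E v u" using Nv by auto
      have Euv: "E u v" using sym Evu by blast
      have uv: "u \<noteq> v" using irr Evu by auto
      have onlyu: "w = u" if "w \<in> V" "E w v" for w using that sym Nv by blast
      show ?thesis
      proof (cases "\<tau> u < deg V E u")
        case True
        define V' where "V' = V - {v}"
        have finV': "finite V'" using fin by (simp add: V'_def)
        have cV: "card V' < card V" unfolding V'_def by (rule card_Diff1_less[OF fin vV])
        have degV': "deg V' E w = (if E w v then deg V E w - 1 else deg V E w)" for w
          unfolding V'_def using deg_remove[OF fin vV] .
        have "\<forall>w\<in>V'. \<tau> w \<le> deg V' E w"
        proof
          fix w assume wV': "w \<in> V'"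
          then have wV: "w \<in> V" by (simp add: V'_def)
          show "\<tau> w \<le> deg V' E w"
          proof (cases "E w v")
            case True
            then have "w = u" using onlyu wV by blast
            then show ?thesis using \<open>\<tau> u < deg V E u\<close> True by (simp add: degV')
          next
            case False then show ?thesis using td wV by (simp add: degV')
          qed
        qed
        moreover have "\<not> has_cycle V' E" using nc has_cycle_mono[of V' V E] by (auto simp: V'_def)
        ultimately obtain r' D m where g: "good V' E \<tau> r' D m"
          using less.hyps[OF cV finV' sym irr] by blast
        define r where "r w = (if w = v then Suc (r' u) else r' w)" for w
        let ?P = "D \<union> m ` D"
        have PV: "?P \<subseteq> V'" using goodD(1,2)[OF g] by blast
        have finP: "finite ?P" using PV finV' finite_subset by blast
        have "(\<Sum>w\<in>?P. deg V E w) \<le> (\<Sum>w\<in>?P. deg V' E w + (if w = u then 1 else 0))"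
        proof (rule sum_mono)
          fix w assume "w \<in> ?P"
          then have wV: "w \<in> V" using PV by (auto simp: V'_def)
          show "deg V E w \<le> deg V' E w + (if w = u then 1 else 0)"
          proof (cases "E w v")
            case True
            then have "w = u" using onlyu wV by blast
            then show ?thesis using True by (simp add: degV')
          next
            case False then show ?thesis by (simp add: degV')
          qed
        qed
        also have "\<dots> = (\<Sum>w\<in>?P. deg V' E w) + (if u \<in> ?P then 1 else 0)"
          using finP by (simp add: sum.distrib)
        also have "\<dots> \<le> (\<Sum>w\<in>V'. \<tau> w) + 1" using goodD(8)[OF g] by simp
        also have "\<dots> = (\<Sum>w\<in>V. \<tau> w)" using fin vV tv by (simp add: V'_def sum.remove)
        finally have sumP: "(\<Sum>w\<in>?P. deg V E w) \<le> (\<Sum>w\<in>V. \<tau> w)" .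
        have cnt: "\<tau> w \<le> card {x\<in>V. E w x \<and> r x < r w}" if w: "w \<in> V - D" for w
        proof (cases "w = v")
          case True
          have "{u} \<subseteq> {x\<in>V. E w x \<and> r x < r w}" using True uV Evu uv by (auto simp: r_def)
          then have "card {u} \<le> card {x\<in>V. E w x \<and> r x < r w}" using fin by (intro card_mono) auto
          then show ?thesis using tv True by simp
        next
          case False
          then have "w \<in> V' - D" using w by (auto simp: V'_def)
          then have A: "\<tau> w \<le> card {x\<in>V'. E w x \<and> r' x < r' w}" using goodD(6)[OF g] by blast
          show ?thesis
            by (rule count_ext[OF _ _ _ A, where c = False]) (use fin vV False in \<open>auto simp: V'_def r_def\<close>)
        qed
        have gg: "D \<subseteq> V'" "m ` D \<subseteq> V'" "inj_on m D" "m ` D \<inter> D = {}" "\<forall>d\<in>D. E d (m d)"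
          using goodD[OF g] by blast+
        have M0: "\<forall>w\<in>D \<union> m ` D. 1 \<le> \<tau> w" using gg(1,2) t1 by (auto simp: V'_def)
        have M1: "D \<subseteq> V" "m ` D \<subseteq> V" using gg(1,2) by (auto simp: V'_def)
        have "good V E \<tau> r D m"
          by (rule goodI[OF M1 gg(3,4) _ cnt _ sumP]) (use gg(5) M0 in blast)+

        then show ?thesis by blast
      next
        case False
        then have tu: "\<tau> u = deg V E u" using td uV by force
        define V1 where "V1 = V - {v}"
        define V' where "V' = V1 - {u}"
        define \<tau>' where "\<tau>' w = (if E w u then \<tau> w - 1 else \<tau> w)" for w
        have finV1: "finite V1" using fin by (simp add: V1_def)
        have uV1: "u \<in> V1" using uV uv by (simp add: V1_def)
        have finV': "finite V'" using fin by (simp add: V'_def V1_def)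
        have cV: "card V' < card V" using fin vV uV1
        proof -
          have "card V' < card V1" unfolding V'_def by (rule card_Diff1_less[OF finV1 uV1])
          moreover have "card V1 < card V" unfolding V1_def by (rule card_Diff1_less[OF fin vV])
          ultimately show ?thesis by simp
        qed
        have degV1: "deg V1 E w = (if E w v then deg V E w - 1 else deg V E w)" for w
          unfolding V1_def using deg_remove[OF fin vV] .
        have degV': "deg V' E w = (if E w u then deg V E w - 1 else deg V E w)" if "w \<in> V'" for w
        proof -
          have "\<not> E w v" using that onlyu by (auto simp: V'_def V1_def)
          then show ?thesis unfolding V'_def using deg_remove[OF finV1 uV1] degV1 by simp
        qed
        have "\<forall>w\<in>V'. \<tau>' w \<le> deg V' E w"
        proof
          fix w assume wV': "w \<in> V'"
          then have "\<tau> w \<le> deg V E w" using td by (simp add: V'_def V1_def)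
          then show "\<tau>' w \<le> deg V' E w" unfolding \<tau>'_def degV'[OF wV'] by (simp add: diff_le_mono)
        qed
        moreover have "\<not> has_cycle V' E" using nc has_cycle_mono[of V' V E] by (auto simp: V'_def V1_def)
        ultimately obtain r' D' m' where g: "good V' E \<tau>' r' D' m'"
          using less.hyps[OF cV finV' sym irr] by blast
        define r where "r w = (if w = u then 0 else if w = v then 1 else r' w + 2)" for w
        define D where "D = insert u D'"
        define m where "m = m'(u := v)"
        have D'V: "D' \<subseteq> V'" and mD'V: "m' ` D' \<subseteq> V'" using goodD(1,2)[OF g] by blast+
        have uD': "u \<notin> D'" "v \<notin> D'" "u \<notin> m' ` D'" "v \<notin> m' ` D'" using D'V mD'V by (auto simp: V'_def V1_def)
        have mD: "m ` D = insert v (m' ` D')" using uD' by (auto simp: m_def D_def)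
        let ?P' = "D' \<union> m' ` D'"
        have PD: "D \<union> m ` D = insert u (insert v ?P')" by (subst mD) (auto simp: D_def)
        have PV: "?P' \<subseteq> V'" using D'V mD'V by auto
        have finP: "finite ?P'" using PV finV' finite_subset by blast
        have "(\<Sum>w\<in>D \<union> m ` D. deg V E w) = deg V E u + deg V E v + (\<Sum>w\<in>?P'. deg V E w)"
          using uD' uv finP by (simp add: PD)
        also have "(\<Sum>w\<in>?P'. deg V E w) = (\<Sum>w\<in>?P'. deg V' E w + (if E w u then 1 else 0))"
        proof (rule sum.cong)
          fix w assume "w \<in> ?P'"
          then have "w \<in> V'" using PV by blast
          then show "deg V E w = deg V' E w + (if E w u then 1 else 0)"
            using deg_pos[OF fin uV, of E w] degV'[of w] by (cases "E w u") auto
        qed simp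
        also have "\<dots> = (\<Sum>w\<in>?P'. deg V' E w) + (\<Sum>w\<in>?P'. (if E w u then 1 else 0))"
          by (simp add: sum.distrib)
        also have "\<dots> \<le> (\<Sum>w\<in>V'. \<tau>' w) + (\<Sum>w\<in>V'. (if E w u then 1 else 0))"
          by (rule add_mono[OF goodD(8)[OF g] sum_mono2[OF finV' PV]]) simp
        also have "(\<Sum>w\<in>V'. \<tau>' w) + (\<Sum>w\<in>V'. (if E w u then 1 else 0)) = (\<Sum>w\<in>V'. \<tau> w)"
          by (rule trans[OF sum.distrib[symmetric]], rule sum.cong) (use t1 in \<open>auto simp: \<tau>'_def V'_def V1_def\<close>)
        finally have "(\<Sum>w\<in>D \<union> m ` D. deg V E w) \<le> \<tau> u + \<tau> v + (\<Sum>w\<in>V'. \<tau> w)"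
          using tu tv dv1 by simp
        also have "\<tau> u + \<tau> v + (\<Sum>w\<in>V'. \<tau> w) = (\<Sum>w\<in>V. \<tau> w)"
        proof -
          have "(\<Sum>w\<in>V. \<tau> w) = \<tau> v + (\<Sum>w\<in>V1. \<tau> w)" using fin vV by (simp add: V1_def sum.remove)
          moreover have "(\<Sum>w\<in>V1. \<tau> w) = \<tau> u + (\<Sum>w\<in>V'. \<tau> w)" using finV1 uV1 by (simp add: V'_def sum.remove)
          ultimately show ?thesis by simp
        qed
        finally have sumP: "(\<Sum>w\<in>D \<union> m ` D. deg V E w) \<le> (\<Sum>w\<in>V. \<tau> w)" .
        have cnt: "\<tau> w \<le> card {x\<in>V. E w x \<and> r x < r w}" if w: "w \<in> V - D" for w
        proof (cases "w = v")
          case True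
          have "{u} \<subseteq> {x\<in>V. E w x \<and> r x < r w}" using True uV Evu uv by (auto simp: r_def)
          then have "card {u} \<le> card {x\<in>V. E w x \<and> r x < r w}" using fin by (intro card_mono) auto
          then show ?thesis using tv True by simp
        next
          case False
          then have wV': "w \<in> V' - D'" "w \<noteq> u" using w by (auto simp: V'_def V1_def D_def)
          then have A: "\<tau>' w \<le> card {x\<in>V'. E w x \<and> r' x < r' w}" using goodD(6)[OF g] by blast
          show ?thesis
            by (rule count_ext[OF _ _ _ A, where c = "E w u" and z = u]) (use fin uV uv False wV' in \<open>auto simp: V'_def V1_def r_def \<tau>'_def\<close>)
        qed
        have injm: "inj_on m D"
        proof -
          have "inj_on m' D'" using goodD(3)[OF g] .
          moreover have "inj_on m D' = inj_on m' D'" unfolding m_def using uD'(1)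
            by (intro inj_on_cong) auto
          ultimately have "inj_on m D'" by simp
          moreover have "m u \<notin> m ` D'" using uD'(1,4) by (auto simp: m_def)
          ultimately show ?thesis unfolding D_def by (simp add: uD'(1))
        qed
        have gg: "inj_on m' D'" "m' ` D' \<inter> D' = {}" "\<forall>d\<in>D'. E d (m' d)"
          using goodD[OF g] by blast+
        have M0: "\<forall>w\<in>D \<union> m ` D. 1 \<le> \<tau> w" using PD PV t1 uV vV by (auto simp: V'_def V1_def)
        have M1: "D \<subseteq> V" "m ` D \<subseteq> V"
        proof -
          have "V' \<subseteq> V" by (auto simp: V'_def V1_def)
          then show "D \<subseteq> V" using D'V uV unfolding D_def by blast
          show "m ` D \<subseteq> V" unfolding mD using mD'V vV \<open>V' \<subseteq> V\<close> by blast
        qed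
        have M2: "m ` D \<inter> D = {}"
          unfolding mD using gg(2) uD' uv unfolding D_def by blast
        have M3: "\<forall>d\<in>D. E d (m d)"
        proof
          fix d assume "d \<in> D"
          then consider "d = u" | "d \<in> D'" unfolding D_def by blast
          then show "E d (m d)"
          proof cases
            case 1 then show ?thesis using Euv by (simp add: m_def)
          next
            case 2 then have "d \<noteq> u" using uD'(1) by blast
            then show ?thesis using gg(3) 2 by (simp add: m_def)
          qed
        qed
        have "good V E \<tau> r D m"
          by (rule goodI[OF M1 injm M2 _ cnt _ sumP]) (use M3 M0 in blast)+


        then show ?thesis by blast
      qed
    qed
  qed
qed


lemma matching_lower:
  assumes fin: "finite V" and sym: "\<forall>u v. E u v \<longrightarrow> E v u" and EV: "\<forall>u v. E u v \<longrightarrow> u \<in> V \<and> v \<in> V"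
    and D0V: "D0 \<subseteq> V" and inj: "inj_on m D0" and disj: "m ` D0 \<inter> D0 = {}" and edg: "\<forall>d\<in>D0. E d (m d)"
    and tdef: "\<forall>w. \<tau> w = (if w \<in> D0 \<union> m ` D0 then deg V E w else 0)"
    and dyno: "is_dynamo V E \<tau> D"
  shows "card D0 \<le> card D"
proof -
  define S where "S = (\<lambda>k. (dyn_step V E \<tau> ^^ k) D)"
  have DV: "D \<subseteq> V" using dyno by (simp add: is_dynamo_def)
  obtain K where SK: "S K = V" using dyno by (auto simp: is_dynamo_def S_def)
  have hit: "d \<in> D \<or> m d \<in> D" if d: "d \<in> D0" for d
  proof (rule ccontr)
    assume "\<not> ?thesis"
    then have n1: "d \<notin> D" and n2: "m d \<notin> D" by auto
    have E1: "E d (m d)" using edg d by blast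
    then have E2: "E (m d) d" using sym by blast
    have V1: "d \<in> V" and V2: "m d \<in> V" using EV E1 by blast+
    have t1: "\<tau> d = deg V E d" and t2: "\<tau> (m d) = deg V E (m d)" using tdef d by auto
    have "(LEAST k. m d \<in> S k) < (LEAST k. d \<in> S k)"
      by (rule first_time[OF S_def fin DV SK t1 V1 n1 E1 V2])
    moreover have "(LEAST k. d \<in> S k) < (LEAST k. m d \<in> S k)"
      by (rule first_time[OF S_def fin DV SK t2 V2 n2 E2 V1])
    ultimately show False by simp
  qed
  define f where "f d = (if d \<in> D then d else m d)" for d
  have "f ` D0 \<subseteq> D" using hit by (auto simp: f_def)
  moreover have "inj_on f D0"
  proof (rule inj_onI)
    fix x y assume xy: "x \<in> D0" "y \<in> D0" "f x = f y"
    show "x = y"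
    proof (cases "x \<in> D"; cases "y \<in> D")
      assume "x \<in> D" "y \<in> D" then show ?thesis using xy by (simp add: f_def)
    next
      assume a: "x \<in> D" "y \<notin> D"
      then have "x = m y" using xy by (simp add: f_def)
      then show ?thesis using xy disj by blast
    next
      assume a: "x \<notin> D" "y \<in> D"
      then have "m x = y" using xy by (simp add: f_def)
      then show ?thesis using xy disj by blast
    next
      assume a: "x \<notin> D" "y \<notin> D"
      then have "m x = m y" using xy by (simp add: f_def)
      then show ?thesis using xy inj by (simp add: inj_on_def)
    qed
  qed
  moreover have "finite D" using DV fin finite_subset by blast
  ultimately show ?thesis using card_inj_on_le by blast
qed

lemma dyn_le: "is_dynamo V E \<tau> D \<Longrightarrow> dyn V E \<tau> \<le> card D"
  unfolding dyn_def by (rule Least_le) blast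

lemma V_dynamo: "is_dynamo V E \<tau> V"
  unfolding is_dynamo_def by (metis funpow_0 order_refl)

lemma dyn_ex: "\<exists>D. is_dynamo V E \<tau> D \<and> card D = dyn V E \<tau>"
proof -
  have "\<exists>n D. is_dynamo V E \<tau> D \<and> card D = n" using V_dynamo by blast
  then show ?thesis unfolding dyn_def by (rule LeastI_ex)
qed

theorem theorem2:
  fixes V :: "'a set" and E :: "'a \<Rightarrow> 'a \<Rightarrow> bool" and t :: real
  assumes "forest V E" and "t > 0"
  shows "\<exists>\<tau>'. threshold_assignment V E \<tau>' \<and> zero_degree_assignment V E \<tau>'
           \<and> avg_tau V \<tau>' \<le> t \<and> Ldyn V E t = dyn V E \<tau>'"
proof -
  have fin: "finite V" and EV: "\<forall>u v. E u v \<longrightarrow> u \<in> V \<and> v \<in> V" and sym: "\<forall>u v. E u v \<longrightarrow> E v u"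
    and irr: "\<forall>v. \<not> E v v" and nc: "\<not> has_cycle V E"
    using assms(1) unfolding forest_def simple_graph_def by blast+
  define A where "A = {dyn V E \<tau> | \<tau>. threshold_assignment V E \<tau> \<and> avg_tau V \<tau> \<le> t}"
  have LA: "Ldyn V E t = Max A" by (simp add: Ldyn_def A_def)
  have "A \<subseteq> {..card V}" using dyn_le[OF V_dynamo] by (auto simp: A_def)
  then have finA: "finite A" using finite_subset by blast
  have "threshold_assignment V E (\<lambda>_. 0)" by (simp add: threshold_assignment_def)
  moreover have "avg_tau V (\<lambda>_. 0) \<le> t" using assms(2) by (simp add: avg_tau_def)
  ultimately have "dyn V E (\<lambda>_. 0) \<in> A" unfolding A_def by blast
  then have neA: "A \<noteq> {}" by blast
  have "Max A \<in> A" using Max_in[OF finA neA] .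
  then obtain \<tau>0 where th0: "threshold_assignment V E \<tau>0" and av0: "avg_tau V \<tau>0 \<le> t"
    and d0: "dyn V E \<tau>0 = Max A" unfolding A_def by auto
  have td: "\<forall>v\<in>V. \<tau>0 v \<le> deg V E v" using th0 by (simp add: threshold_assignment_def)
  obtain r D m where g: "good V E \<tau>0 r D m" using key[OF fin sym irr nc td] by blast
  have "is_dynamo V E \<tau>0 D"
    by (rule rank_dynamo[OF fin goodD(1)[OF g], where r = r]) (use goodD(6)[OF g] in blast)
  then have dD: "dyn V E \<tau>0 \<le> card D" by (rule dyn_le)
  let ?P = "D \<union> m ` D"
  have PV: "?P \<subseteq> V" using goodD(1,2)[OF g] by blast
  define \<tau>' where "\<tau>' w = (if w \<in> ?P then deg V E w else 0)" for w
  have th': "threshold_assignment V E \<tau>'" by (simp add: threshold_assignment_def \<tau>'_def)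
  have zd: "zero_degree_assignment V E \<tau>'" by (simp add: zero_degree_assignment_def \<tau>'_def)
  have "(\<Sum>w\<in>V. \<tau>' w) = (\<Sum>w\<in>V \<inter> ?P. deg V E w)"
    unfolding \<tau>'_def using sum.inter_restrict[OF fin, of "deg V E" ?P] by simp
  also have "V \<inter> ?P = ?P" using PV by blast
  finally have "(\<Sum>w\<in>V. \<tau>' w) \<le> (\<Sum>w\<in>V. \<tau>0 w)" using goodD(8)[OF g] by simp
  then have "avg_tau V \<tau>' \<le> avg_tau V \<tau>0" unfolding avg_tau_def
    by (intro divide_right_mono) (simp_all add: of_nat_sum[symmetric] del: of_nat_sum)
  then have av': "avg_tau V \<tau>' \<le> t" using av0 by linarith
  have "dyn V E \<tau>' \<in> A" unfolding A_def using th' av' by blast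
  then have le1: "dyn V E \<tau>' \<le> Max A" using Max_ge[OF finA] by blast
  obtain D' where D': "is_dynamo V E \<tau>' D'" "card D' = dyn V E \<tau>'" using dyn_ex by blast
  have "card D \<le> card D'"
    by (rule matching_lower[OF fin sym EV goodD(1,3,4)[OF g] _ _ D'(1)])
       (use goodD(5)[OF g] in \<open>auto simp: \<tau>'_def\<close>)
  then have "Max A \<le> dyn V E \<tau>'" using dD d0 D'(2) by simp
  then show ?thesis using le1 LA th' zd av' by (intro exI[of _ \<tau>']) simp
qed

end
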